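(* For all words $z\in\{0,1\}^*$ and all integers $k\geq 1$, \[V([z10^k1]_F)=\begin{cases} V([z10^{k+1}]_F), & \text{if } k \text{ is odd};\\ V([z10^k]_F)+V([z(01)^{k/2}]_F), & \text{if } k \text{ is even}.\end{cases}\]
   Context: Fibonacci numbers: $F_0=0$, $F_1=1$, $F_{m+2}=F_{m+1}+F_m$. For a word $k_m\cdots k_0$ of nonnegative integer digits, $[k_m\cdots k_0]_F=\sum_{i=0}^m k_iF_{i+2}$; $u^j$ denotes $j$ concatenated copies of $u$. Standard Fibonacci words: $f_{-1}=b$, $f_0=a$, $f_{m+1}=f_mf_{m-1}$. The Fibonacci word ${\bf f}=\lim f_m$, with prefix of length $j$ denoted ${\bf f}(0..j]$. $V(N)$ is the number of factorizations of ${\bf f}(0..N]$ as $f_m^{k_m}\cdots f_0^{k_0}$ with all $k_i\geq 0$ (into standard words $f_i$, $i\geq0$, in non-strictly decreasing order of index), counted up to leading zero exponents; $V(0)=1$. *)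

theory Defs
  imports "HOL-Number_Theory.Fib"
begin

datatype letter = a | b

text \<open>Standard Fibonacci words: fw m = f_m for m \<ge> 0 (with f_{-1} = b, f_0 = a,
  so f_1 = f_0 f_{-1} = ab and f_{m+2} = f_{m+1} f_m).\<close>
fun fw :: "nat \<Rightarrow> letter list" where
  "fw 0 = [a]"
| "fw (Suc 0) = [a, b]"
| "fw (Suc (Suc m)) = fw (Suc m) @ fw m"

text \<open>Prefix of length N of the infinite Fibonacci word (fw N has length F_{N+2} > N,
  and each fw m is a prefix of fw (m+1)).\<close>
definition fib_prefix :: "nat \<Rightarrow> letter list" where
  "fib_prefix N = take N (fw N)"

definition fact_word :: "(nat \<Rightarrow> nat) \<Rightarrow> nat \<Rightarrow> letter list" where
  "fact_word k m = concat (map (\<lambda>i. concat (replicate (k i) (fw i))) (rev [0..<m]))"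

text \<open>V(N): number of factorizations of the prefix of length N, counted as finitely
  supported exponent sequences (i.e. up to leading zero exponents).\<close>
definition V :: "nat \<Rightarrow> nat" where
  "V N = card {k :: nat \<Rightarrow> nat. \<exists>m. (\<forall>i\<ge>m. k i = 0) \<and> fact_word k m = fib_prefix N}"

text \<open>Fibonacci value of a digit word k_m ... k_0 (most significant digit first):
  sum of k_i F_{i+2}.\<close>
definition fibval :: "nat list \<Rightarrow> nat" where
  "fibval ds = (\<Sum>i<length ds. rev ds ! i * fib (i + 2))"

end

theory Submission
  imports Defs
begin

fun sl :: "letter \<Rightarrow> letter list" where
  "sl a = [a, b]" | "sl b = [a]"

definition sig :: "letter list \<Rightarrow> letter list" where
  "sig w = concat (map sl w)"

lemma sig_Nil[simp]: "sig [] = []" by (simp add: sig_def)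
lemma sig_Cons[simp]: "sig (x # w) = sl x @ sig w" by (simp add: sig_def)
lemma sig_append[simp]: "sig (u @ v) = sig u @ sig v" by (simp add: sig_def)
lemma sig_concat: "sig (concat ws) = concat (map sig ws)" by (induction ws) auto

lemma sig_a[simp]: "sig (a # w) = a # b # sig w" by simp
lemma sig_b[simp]: "sig (b # w) = a # sig w" by simp
declare sig_Cons[simp del]

lemma sig_not_b: "sig y \<noteq> b # t"
proof (cases y)
  case (Cons x ys) then show ?thesis by (cases x) auto
qed simp

lemma sig_inj: "sig x = sig y \<Longrightarrow> x = y"
proof (induction x arbitrary: y)
  case Nil
  then show ?case
  proof (cases y)
    case (Cons x ys) then show ?thesis using Nil by (cases x) auto
  qed simp
next
  case (Cons x xs)
  show ?case
  proof (cases y)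
    case Nil
    then show ?thesis using Cons.prems by (cases x) auto
  next
    case (Cons y ys)
    show ?thesis
    proof (cases x; cases y)
      assume "x = a" "y = a" then show ?thesis using Cons Cons.prems Cons.IH by auto
    next
      assume "x = a" "y = b" then show ?thesis using Cons Cons.prems sig_not_b by (metis list.inject sig_a sig_b)
    next
      assume "x = b" "y = a" then show ?thesis using Cons Cons.prems sig_not_b by (metis list.inject sig_a sig_b)
    next
      assume "x = b" "y = b" then show ?thesis using Cons Cons.prems Cons.IH by auto
    qed
  qed
qed

lemma no_bb: "sig z \<noteq> y @ [b, b]"
proof
  assume h: "sig z = y @ [b, b]"
  show False
  proof (cases z rule: rev_cases)
    case Nil then show ?thesis using h by simp
  next
    case (snoc z' x)
    then show ?thesis using h by (cases x) auto
  qed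
qed

lemma fw_sig: "fw (Suc m) = sig (fw m)"
proof (induction m rule: fw.induct)
  case (3 m)
  then show ?case by (metis fw.simps(3) sig_append)
qed auto

lemma len_fw: "Suc m \<le> length (fw m)"
  by (induction m rule: fw.induct) auto

lemma fw_Suc_prefix: "\<exists>r. fw (Suc m) = fw m @ r \<and> r \<noteq> []"
proof (cases m)
  case 0 then show ?thesis by simp
next
  case (Suc m')
  then show ?thesis using len_fw[of m'] by auto
qed

lemma fw_mono: "m \<le> m' \<Longrightarrow> \<exists>r. fw m' = fw m @ r"
proof (induction m' rule: dec_induct)
  case base then show ?case by simp
next
  case (step n)
  then show ?case using fw_Suc_prefix[of n] by fastforce
qed

lemma take_fw: "n \<le> length (fw m) \<Longrightarrow> m \<le> m' \<Longrightarrow> take n (fw m') = take n (fw m)"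
  using fw_mono by fastforce

lemma sig_ne: "r \<noteq> [] \<Longrightarrow> \<exists>t. sig r = a # t"
proof (cases r)
  case (Cons x ys) then show ?thesis by (cases x) auto
qed simp

definition S :: "letter list \<Rightarrow> (nat \<Rightarrow> nat) set" where
  "S Y = {k :: nat \<Rightarrow> nat. \<exists>m. (\<forall>i\<ge>m. k i = 0) \<and> fact_word k m = Y}"

definition Gs :: "letter list \<Rightarrow> nat" where "Gs Y = card (S Y)"

lemma V_Gs: "V N = Gs (fib_prefix N)"
  by (simp add: V_def Gs_def S_def)

lemma fact_word_Suc:
  "fact_word k (Suc m) = sig (fact_word (k \<circ> Suc) m) @ replicate (k 0) a"
proof -
  have "[0..<Suc m] = 0 # map Suc [0..<m]"
    by (simp only: upt_conv_Cons[of 0 "Suc m", OF zero_less_Suc] map_Suc_upt)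
  then have "rev [0..<Suc m] = map Suc (rev [0..<m]) @ [0]" by (simp add: rev_map)
  moreover have "concat (replicate n [a]) = replicate n a" for n
    by (induction n) auto
  ultimately show ?thesis
    by (simp add: fact_word_def sig_concat o_def fw_sig map_replicate)
qed

lemma fact_word_ext: "k m = 0 \<Longrightarrow> fact_word k (Suc m) = fact_word k m"
  by (simp add: fact_word_def)

lemma memS: "k \<in> S Y \<longleftrightarrow> (\<exists>m. (\<forall>i\<ge>m. k (Suc i) = 0) \<and> sig (fact_word (k \<circ> Suc) m) @ replicate (k 0) a = Y)"
proof
  assume "k \<in> S Y"
  then obtain m where m: "\<forall>i\<ge>m. k i = 0" "fact_word k m = Y" by (auto simp: S_def)
  then have "fact_word k (Suc m) = Y" using fact_word_ext by simp
  then show "\<exists>m. (\<forall>i\<ge>m. k (Suc i) = 0) \<and> sig (fact_word (k \<circ> Suc) m) @ replicate (k 0) a = Y"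
    using m(1) fact_word_Suc by (metis le_SucI)
next
  assume "\<exists>m. (\<forall>i\<ge>m. k (Suc i) = 0) \<and> sig (fact_word (k \<circ> Suc) m) @ replicate (k 0) a = Y"
  then obtain m where m: "\<forall>i\<ge>m. k (Suc i) = 0" "sig (fact_word (k \<circ> Suc) m) @ replicate (k 0) a = Y" by blast
  have "\<forall>i\<ge>Suc m. k i = 0"
    using m(1) by (metis Suc_le_D Suc_le_mono)
  then show "k \<in> S Y" using m(2) fact_word_Suc unfolding S_def by blast
qed


lemma len_concat_rep: "length (concat (replicate n w)) = n * length w"
  by (induction n) auto

lemma len_fact_word: "length (fact_word k m) = (\<Sum>i<m. k i * length (fw i))"
proof (induction m)
  case 0 then show ?case by (simp add: fact_word_def)
next
  case (Suc m)
  have "fact_word k (Suc m) = concat (replicate (k m) (fw m)) @ fact_word k m"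
    by (simp add: fact_word_def)
  then show ?case using Suc by (simp add: len_concat_rep)
qed

lemma S_bound:
  assumes "k \<in> S Y"
  shows "k i \<le> length Y \<and> (length Y \<le> i \<longrightarrow> k i = 0)"
proof -
  obtain m where m: "\<forall>i\<ge>m. k i = 0" "fact_word k m = Y" using assms by (auto simp: S_def)
  show ?thesis
  proof (cases "i < m")
    case True
    have "k i * length (fw i) \<le> (\<Sum>i<m. k i * length (fw i))"
      by (rule member_le_sum) (use True in auto)
    then have le: "k i * length (fw i) \<le> length Y" using m(2) len_fact_word[of k m] by simp
    have l1: "Suc i \<le> length (fw i)" by (rule len_fw)
    have "1 \<le> length (fw i)" using l1 by simp
    then have "k i * 1 \<le> k i * length (fw i)" by (rule mult_le_mono2)
    then have a1: "k i \<le> k i * length (fw i)" by simp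
    have a2: "k i > 0 \<longrightarrow> Suc i \<le> k i * length (fw i)"
      using l1 by (cases "k i") auto
    have c1: "k i \<le> length Y" using order_trans[OF a1 le] .
    have c2: "k i = 0" if "length Y \<le> i"
    proof (rule ccontr)
      assume "k i \<noteq> 0"
      then have "Suc i \<le> k i * length (fw i)" using a2 by simp
      then show False using le that by linarith
    qed
    show ?thesis using c1 c2 by blast
  next
    case False then show ?thesis using m by auto
  qed
qed

lemma finite_S: "finite (S Y)"
proof -
  define n where "n = length Y"
  define T where "T = {k :: nat \<Rightarrow> nat. \<forall>i. k i \<le> n \<and> (n \<le> i \<longrightarrow> k i = 0)}"
  have sub: "S Y \<subseteq> T" using S_bound unfolding T_def n_def by blast
  have inj: "inj_on (\<lambda>k. map k [0..<n]) T"
  proof (rule inj_onI)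
    fix x y assume "x \<in> T" "y \<in> T" "map x [0..<n] = map y [0..<n]"
    then have "x i = y i" for i
    proof (cases "i < n")
      case True
      then show ?thesis using \<open>map x [0..<n] = map y [0..<n]\<close> by (simp add: map_eq_conv)
    next
      case False
      then show ?thesis using \<open>x \<in> T\<close> \<open>y \<in> T\<close> unfolding T_def by auto
    qed
    then show "x = y" by (rule ext)
  qed
  have "(\<lambda>k. map k [0..<n]) ` T \<subseteq> {xs. set xs \<subseteq> {..n} \<and> length xs = n}"
    unfolding T_def by auto
  moreover have "finite {xs. set xs \<subseteq> {..n} \<and> length xs = n}"
    by (rule finite_lists_length_eq) simp
  ultimately have "finite ((\<lambda>k. map k [0..<n]) ` T)" by (rule finite_subset)
  then have "finite T" using inj by (rule finite_imageD)
  then show ?thesis by (rule finite_subset[OF sub])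
qed

lemma Gs_split: "Gs Y = card {k \<in> S Y. k 0 = 0} + card {k \<in> S Y. 0 < k 0}"
proof -
  have "S Y = {k \<in> S Y. k 0 = 0} \<union> {k \<in> S Y. 0 < k 0}" by auto
  then have "card (S Y) = card ({k \<in> S Y. k 0 = 0} \<union> {k \<in> S Y. 0 < k 0})" by simp
  also have "\<dots> = card {k \<in> S Y. k 0 = 0} + card {k \<in> S Y. 0 < k 0}"
    by (rule card_Un_disjoint) (use finite_S in auto)
  finally show ?thesis by (simp add: Gs_def)
qed

definition shft :: "(nat \<Rightarrow> nat) \<Rightarrow> nat \<Rightarrow> nat" where
  "shft h i = (case i of 0 \<Rightarrow> 0 | Suc j \<Rightarrow> h j)"

lemma card_S1_sig: "card {k \<in> S (sig Z). k 0 = 0} = Gs Z"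
proof -
  have "bij_betw (\<lambda>k. k \<circ> Suc) {k \<in> S (sig Z). k 0 = 0} (S Z)"
  proof (rule bij_betw_byWitness[where f' = shft])
    show "\<forall>k\<in>{k \<in> S (sig Z). k 0 = 0}. shft (k \<circ> Suc) = k"
      by (auto simp: shft_def fun_eq_iff split: nat.split)
    show "\<forall>h\<in>S Z. shft h \<circ> Suc = h" by (auto simp: shft_def fun_eq_iff)
    show "(\<lambda>k. k \<circ> Suc) ` {k \<in> S (sig Z). k 0 = 0} \<subseteq> S Z"
    proof
      fix h assume "h \<in> (\<lambda>k. k \<circ> Suc) ` {k \<in> S (sig Z). k 0 = 0}"
      then obtain k where k: "k \<in> S (sig Z)" "k 0 = 0" "h = k \<circ> Suc" by blast
      then obtain m where m: "\<forall>i\<ge>m. k (Suc i) = 0" "sig (fact_word (k \<circ> Suc) m) @ replicate (k 0) a = sig Z"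
        using memS by blast
      then have "fact_word h m = Z" using k sig_inj by auto
      then show "h \<in> S Z" using m k unfolding S_def by auto
    qed
    show "shft ` S Z \<subseteq> {k \<in> S (sig Z). k 0 = 0}"
    proof
      fix k assume "k \<in> shft ` S Z"
      then obtain h where h: "h \<in> S Z" "k = shft h" by blast
      then obtain m where m: "\<forall>i\<ge>m. h i = 0" "fact_word h m = Z" by (auto simp: S_def)
      have "k \<circ> Suc = h" "k 0 = 0" using h by (auto simp: shft_def fun_eq_iff)
      then have "\<forall>i\<ge>m. k (Suc i) = 0" "sig (fact_word (k \<circ> Suc) m) @ replicate (k 0) a = sig Z"
        using m by auto
      then have "k \<in> S (sig Z)" unfolding memS by blast
      then show "k \<in> {k \<in> S (sig Z). k 0 = 0}" using \<open>k 0 = 0\<close> by auto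
    qed
  qed
  then show ?thesis unfolding Gs_def by (rule bij_betw_same_card)
qed

lemma S1_notsig: "(\<And>Z. Y \<noteq> sig Z) \<Longrightarrow> {k \<in> S Y. k 0 = 0} = {}"
  using memS by fastforce

lemma rep_pos: "0 < n \<Longrightarrow> replicate n x = replicate (n - 1) x @ [x]"
proof -
  assume "0 < n"
  then obtain j where "n = Suc j" using not0_implies_Suc by blast
  then show ?thesis by (simp add: replicate_append_same)
qed

lemma card_S2: "card {k \<in> S (Y @ [a]). 0 < k 0} = Gs Y"
proof -
  have "bij_betw (\<lambda>k. k(0 := k 0 - 1)) {k \<in> S (Y @ [a]). 0 < k 0} (S Y)"
  proof (rule bij_betw_byWitness[where f' = "\<lambda>h. h(0 := h 0 + 1)"])
    show "\<forall>k\<in>{k \<in> S (Y @ [a]). 0 < k 0}. (k(0 := k 0 - 1))(0 := (k(0 := k 0 - 1)) 0 + 1) = k"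
      by (auto simp: fun_eq_iff)
    show "\<forall>h\<in>S Y. (h(0 := h 0 + 1))(0 := (h(0 := h 0 + 1)) 0 - 1) = h"
      by (auto simp: fun_eq_iff)
    show "(\<lambda>k. k(0 := k 0 - 1)) ` {k \<in> S (Y @ [a]). 0 < k 0} \<subseteq> S Y"
    proof
      fix h assume "h \<in> (\<lambda>k. k(0 := k 0 - 1)) ` {k \<in> S (Y @ [a]). 0 < k 0}"
      then obtain k where k: "k \<in> S (Y @ [a])" "0 < k 0" "h = k(0 := k 0 - 1)" by blast
      from k(1) obtain m where m: "\<forall>i\<ge>m. k (Suc i) = 0" "sig (fact_word (k \<circ> Suc) m) @ replicate (k 0) a = Y @ [a]"
        unfolding memS by blast
      have hs: "h \<circ> Suc = k \<circ> Suc" "h 0 = k 0 - 1" using k(3) by (auto simp: fun_eq_iff)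
      have "replicate (k 0) a = replicate (k 0 - 1) a @ [a]"
        using k(2) by (rule rep_pos)
      then have "sig (fact_word (h \<circ> Suc) m) @ replicate (h 0) a = Y"
        using m(2) hs by simp
      moreover have "\<forall>i\<ge>m. h (Suc i) = 0" using m(1) k(3) by simp
      ultimately show "h \<in> S Y" unfolding memS by blast
    qed
    show "(\<lambda>h. h(0 := h 0 + 1)) ` S Y \<subseteq> {k \<in> S (Y @ [a]). 0 < k 0}"
    proof
      fix k assume "k \<in> (\<lambda>h. h(0 := h 0 + 1)) ` S Y"
      then obtain h where h: "h \<in> S Y" "k = h(0 := h 0 + 1)" by blast
      from h(1) obtain m where m: "\<forall>i\<ge>m. h (Suc i) = 0" "sig (fact_word (h \<circ> Suc) m) @ replicate (h 0) a = Y"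
        unfolding memS by blast
      have ks: "k \<circ> Suc = h \<circ> Suc" "k 0 = h 0 + 1" using h(2) by (auto simp: fun_eq_iff)
      have "replicate (k 0) a = replicate (h 0) a @ [a]"
        using ks(2) rep_pos[of "k 0" a] by simp
      then have "sig (fact_word (k \<circ> Suc) m) @ replicate (k 0) a = Y @ [a]"
        using m(2) ks(1) by simp
      moreover have "\<forall>i\<ge>m. k (Suc i) = 0" using m(1) h(2) by simp
      ultimately have "k \<in> S (Y @ [a])" unfolding memS by blast
      then show "k \<in> {k \<in> S (Y @ [a]). 0 < k 0}" using ks(2) by simp
    qed
  qed
  then show ?thesis unfolding Gs_def by (rule bij_betw_same_card)
qed

lemma S2_b: "{k \<in> S (Y @ [b]). 0 < k 0} = {}"
proof -
  { fix k assume k: "k \<in> S (Y @ [b])" "0 < k 0"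
    from k(1) obtain m where m: "sig (fact_word (k \<circ> Suc) m) @ replicate (k 0) a = Y @ [b]"
      unfolding memS by blast
    have "replicate (k 0) a = replicate (k 0 - 1) a @ [a]" using k(2) by (rule rep_pos)
    then have "(sig (fact_word (k \<circ> Suc) m) @ replicate (k 0 - 1) a) @ [a] = Y @ [b]"
      using m by simp
    then have False by (simp only: append1_eq_conv) simp
  }
  then show ?thesis by blast
qed

lemma G_Ra: "Gs (sig (X @ [a])) = Gs (X @ [a])"
proof -
  have "sig (X @ [a]) = (sig X @ [a]) @ [b]" by simp
  then have e: "{k \<in> S (sig (X @ [a])). 0 < k 0} = {}" using S2_b by metis
  have "Gs (sig (X @ [a])) = card {k \<in> S (sig (X @ [a])). k 0 = 0} + card {k \<in> S (sig (X @ [a])). 0 < k 0}"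
    by (rule Gs_split)
  also have "\<dots> = Gs (X @ [a])" by (simp only: card_S1_sig e card.empty add_0_right)
  finally show ?thesis .
qed

lemma G_Rb: "Gs (sig (X @ [b])) = Gs (X @ [b]) + Gs (sig X)"
proof -
  have "sig (X @ [b]) = sig X @ [a]" by simp
  then have e: "card {k \<in> S (sig (X @ [b])). 0 < k 0} = Gs (sig X)" using card_S2 by metis
  have "Gs (sig (X @ [b])) = card {k \<in> S (sig (X @ [b])). k 0 = 0} + card {k \<in> S (sig (X @ [b])). 0 < k 0}"
    by (rule Gs_split)
  also have "\<dots> = Gs (X @ [b]) + Gs (sig X)" by (simp only: card_S1_sig e)
  finally show ?thesis .
qed

lemma G_bb: "Gs (Y @ [b, b]) = 0"
proof -
  have e1: "{k \<in> S (Y @ [b, b]). k 0 = 0} = {}" by (rule S1_notsig) (metis no_bb)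
  have "Y @ [b, b] = (Y @ [b]) @ [b]" by simp
  then have e2: "{k \<in> S (Y @ [b, b]). 0 < k 0} = {}" using S2_b by metis
  have "Gs (Y @ [b, b]) = card {k \<in> S (Y @ [b, b]). k 0 = 0} + card {k \<in> S (Y @ [b, b]). 0 < k 0}"
    by (rule Gs_split)
  also have "\<dots> = 0" by (simp only: e1 e2 card.empty add_0_right)
  finally show ?thesis .
qed

definition stp :: "letter list \<Rightarrow> nat \<Rightarrow> letter list" where
  "stp w c = sig w @ replicate c a"

definition Wx :: "letter list \<Rightarrow> nat list \<Rightarrow> letter list" where
  "Wx w e = foldl stp w e"

lemma Wx_Nil[simp]: "Wx w [] = w" by (simp add: Wx_def)
lemma Wx_Cons[simp]: "Wx w (c # e) = Wx (stp w c) e" by (simp add: Wx_def)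
lemma Wx_app[simp]: "Wx w (e1 @ e2) = Wx (Wx w e1) e2" by (simp add: Wx_def)

definition cnta :: "letter list \<Rightarrow> nat" where "cnta w = length (filter (\<lambda>x. x = a) w)"

lemma len_sig: "length (sig w) = length w + cnta w"
proof (induction w)
  case (Cons x w) then show ?case by (cases x) (auto simp: cnta_def)
qed (simp add: cnta_def)

lemma cnta_sig: "cnta (sig w) = length w"
proof (induction w)
  case (Cons x w) then show ?case by (cases x) (auto simp: cnta_def)
qed (simp add: cnta_def)

lemma cnta_rep: "cnta (w @ replicate c a) = cnta w + c"
  by (simp add: cnta_def)

definition fibval1 :: "nat list \<Rightarrow> nat" where
  "fibval1 ds = (\<Sum>i<length ds. rev ds ! i * fib (i + 1))"

lemma fib3: "fib (Suc i + 2) = fib (i + 2) + fib (i + 1)"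
  by (simp add: numeral_2_eq_2)

lemma fibval_snoc: "fibval (d @ [c]) = c + fibval d + fibval1 d"
proof -
  have r: "rev (d @ [c]) = c # rev d" by simp
  have "fibval (d @ [c]) = c * fib (0 + 2) + (\<Sum>i<length d. rev d ! i * fib (Suc i + 2))"
    unfolding fibval_def r length_append_singleton sum.lessThan_Suc_shift nth_Cons_0 nth_Cons_Suc ..
  also have "\<dots> = c + (\<Sum>i<length d. rev d ! i * fib (i + 2) + rev d ! i * fib (i + 1))"
    by (simp only: fib3 distrib_left) (simp add: numeral_2_eq_2)
  also have "\<dots> = c + fibval d + fibval1 d"
    by (simp add: sum.distrib fibval_def fibval1_def)
  finally show ?thesis .
qed

lemma fibval1_snoc: "fibval1 (d @ [c]) = c + fibval d"
proof -
  have r: "rev (d @ [c]) = c # rev d" by simp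
  have "fibval1 (d @ [c]) = c * fib (0 + 1) + (\<Sum>i<length d. rev d ! i * fib (Suc i + 1))"
    unfolding fibval1_def r length_append_singleton sum.lessThan_Suc_shift nth_Cons_0 nth_Cons_Suc ..
  also have "\<dots> = c + fibval d"
    by (simp add: fibval_def numeral_2_eq_2)
  finally show ?thesis .
qed

lemma W_len: "length (Wx [] d) = fibval d \<and> cnta (Wx [] d) = fibval1 d"
proof (induction d rule: rev_induct)
  case Nil then show ?case by (simp add: fibval_def fibval1_def cnta_def)
next
  case (snoc c d)
  then show ?case
    by (simp add: stp_def len_sig cnta_rep cnta_sig fibval_snoc fibval1_snoc)
qed

lemma W_prefix: "set d \<subseteq> {0, 1} \<Longrightarrow> \<exists>m r. fw m = Wx [] d @ r"
proof (induction d rule: rev_induct)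
  case Nil then show ?case by simp
next
  case (snoc c d)
  then obtain m r where mr: "fw m = Wx [] d @ r" by auto
  obtain r1 where r1: "fw (Suc m) = fw m @ r1" "r1 \<noteq> []" using fw_Suc_prefix by blast
  have "fw (Suc (Suc m)) = sig (fw (Suc m))" by (rule fw_sig)
  also have "fw (Suc m) = Wx [] d @ (r @ r1)" using mr r1 by simp
  finally have "fw (Suc (Suc m)) = sig (Wx [] d) @ sig (r @ r1)" by (simp only: sig_append)
  moreover obtain t where "sig (r @ r1) = a # t" using sig_ne r1(2) by blast
  ultimately have e: "fw (Suc (Suc m)) = sig (Wx [] d) @ a # t" by simp
  have "c = 0 \<or> c = 1" using snoc.prems by auto
  then show ?case
  proof
    assume "c = 0"
    then have "fw (Suc (Suc m)) = Wx [] (d @ [c]) @ (a # t)" using e by (simp add: stp_def del: fw.simps)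
    then show ?thesis by blast
  next
    assume "c = 1"
    then have "fw (Suc (Suc m)) = Wx [] (d @ [c]) @ t" using e by (simp add: stp_def del: fw.simps)
    then show ?thesis by blast
  qed
qed

lemma fib_prefix_W: "fw m = w @ r \<Longrightarrow> fib_prefix (length w) = w"
proof -
  assume h: "fw m = w @ r"
  define L where "L = length w"
  have "take L (fw L) = take L (fw (max L m))"
    using len_fw[of L] by (intro take_fw[symmetric]) auto
  also have "\<dots> = take L (fw m)"
    using h by (intro take_fw) (auto simp: L_def)
  also have "\<dots> = w" using h by (simp add: L_def)
  finally show ?thesis by (simp add: fib_prefix_def L_def)
qed

lemma V_W: "set d \<subseteq> {0, 1} \<Longrightarrow> V (fibval d) = Gs (Wx [] d)"
  using W_prefix fib_prefix_W W_len V_Gs by metis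

lemma Wx_rep0: "Wx w (replicate j 0) = (sig ^^ j) w"
  by (induction j arbitrary: w) (auto simp: stp_def funpow_swap1)

fun Rw :: "letter list \<Rightarrow> nat \<Rightarrow> letter list" where
  "Rw w 0 = w" | "Rw w (Suc m) = sig (sig (Rw w m)) @ [a]"

lemma Wx_01: "Wx w (concat (replicate m [0, 1])) = Rw w m"
proof (induction m)
  case (Suc m)
  have "concat (replicate (Suc m) [0, 1::nat]) = concat (replicate m [0, 1]) @ [0, 1]"
    by (simp only: replicate_append_same[symmetric] replicate_Suc) simp
  then show ?case using Suc by (simp add: stp_def)
qed simp

lemma last_sig: "w \<noteq> [] \<Longrightarrow> sig w \<noteq> [] \<and> last (sig w) = (if last w = a then b else a)"
proof (cases w rule: rev_cases)
  case (snoc w' x) then show ?thesis by (cases x) auto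
qed simp

lemma G_star: "Gs (sig (sig (U @ [a])) @ [b]) = Gs (sig U @ [a])"
proof -
  have "sig (sig (U @ [a])) @ [b] = sig ((sig U @ [a]) @ [a])" by simp
  then have "Gs (sig (sig (U @ [a])) @ [b]) = Gs ((sig U @ [a]) @ [a])" using G_Ra by metis
  also have "(sig U @ [a]) @ [a] = sig ((U @ [b]) @ [b])" by simp
  also have "Gs (sig ((U @ [b]) @ [b])) = Gs ((U @ [b]) @ [b]) + Gs (sig (U @ [b]))" by (rule G_Rb)
  also have "Gs ((U @ [b]) @ [b]) = 0" using G_bb by simp
  finally show ?thesis by simp
qed

definition Xw :: "letter list \<Rightarrow> nat \<Rightarrow> letter list" where
  "Xw Z j = (sig ^^ j) (sig Z @ [a])"

lemma XS: "Xw Z (Suc j) = sig (Xw Z j)"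
  by (simp add: Xw_def)

lemma Xl: "Xw Z j \<noteq> [] \<and> last (Xw Z j) = (if even j then a else b)"
proof (induction j)
  case 0 then show ?case by (simp add: Xw_def)
next
  case (Suc j) then show ?case using last_sig[of "Xw Z j"] by (simp only: XS) simp
qed

lemma XE: "\<exists>U. Xw Z (2 * m) = U @ [a] \<and> sig U @ [a] = Rw Z (Suc m)"
proof (induction m)
  case 0 then show ?case by (simp add: Xw_def)
next
  case (Suc m)
  then obtain U where U: "Xw Z (2 * m) = U @ [a]" "sig U @ [a] = Rw Z (Suc m)" by blast
  have "Xw Z (2 * Suc m) = sig (sig (Xw Z (2 * m)))"
    by (simp only: XS[symmetric] mult_Suc_right add_2_eq_Suc)
  then have "Xw Z (2 * Suc m) = (sig (sig U) @ [a, b]) @ [a]" using U by simp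
  moreover have "sig (sig (sig U) @ [a, b]) @ [a] = Rw Z (Suc (Suc m))"
    using U(2)[symmetric] by simp
  ultimately show ?case by blast
qed


lemma w1: "Wx [] (z @ [1] @ replicate k 0 @ [1]) = sig (Xw (Wx [] z) k) @ [a]"
  by (simp add: Xw_def Wx_rep0 stp_def)

lemma w3: "Wx [] (z @ [1] @ replicate k 0) = Xw (Wx [] z) k"
  by (simp add: Xw_def Wx_rep0 stp_def)

lemma w4: "Wx [] (z @ concat (replicate m [0, 1])) = Rw (Wx [] z) m"
  by (simp only: Wx_app Wx_01)


theorem proposition4:
  fixes z :: "nat list" and k :: nat
  assumes "set z \<subseteq> {0, 1}" and "k \<ge> 1"
  shows "V (fibval (z @ [1] @ replicate k 0 @ [1])) =
    (if odd k then V (fibval (z @ [1] @ replicate (k + 1) 0))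
     else V (fibval (z @ [1] @ replicate k 0)) + V (fibval (z @ concat (replicate (k div 2) [0, 1]))))"
proof -
  define Z where "Z = Wx [] z"
  have b1: "set (z @ [1] @ replicate k 0 @ [1]) \<subseteq> {0, 1}" using assms(1) by auto
  have b2: "set (z @ [1] @ replicate j 0) \<subseteq> {0, 1}" for j using assms(1) by auto
  have b4: "set (z @ concat (replicate m [0, 1])) \<subseteq> {0, 1}" for m using assms(1) by auto
  have V1: "V (fibval (z @ [1] @ replicate k 0 @ [1])) = Gs (sig (Xw Z k) @ [a])"
    using V_W[OF b1] w1 unfolding Z_def by metis
  have V2: "V (fibval (z @ [1] @ replicate (k + 1) 0)) = Gs (Xw Z (Suc k))"
    using V_W[OF b2[of "k + 1"]] w3[of z "k + 1"] unfolding Z_def by simp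
  have V3: "V (fibval (z @ [1] @ replicate k 0)) = Gs (Xw Z k)"
    using V_W[OF b2[of k]] w3[of z k] unfolding Z_def by metis
  have V4: "V (fibval (z @ concat (replicate m [0, 1]))) = Gs (Rw Z m)" for m
    using V_W[OF b4[of m]] w4[of z m] unfolding Z_def by metis
  have L: "Gs (sig (Xw Z k) @ [a]) = Gs (Xw Z k @ [b]) + Gs (Xw Z (Suc k))"
  proof -
    have "sig (Xw Z k) @ [a] = sig (Xw Z k @ [b])" by simp
    then show ?thesis using G_Rb XS by metis
  qed
  show ?thesis
  proof (cases "odd k")
    case True
    then have "last (Xw Z k) = b" "Xw Z k \<noteq> []" using Xl[of Z k] by auto
    then have "Xw Z k = butlast (Xw Z k) @ [b]" by (metis append_butlast_last_id)
    then have "Xw Z k @ [b] = butlast (Xw Z k) @ [b, b]" by (metis append.assoc append_Cons append_Nil)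
    then have "Gs (Xw Z k @ [b]) = 0" using G_bb by metis
    then show ?thesis using True V1 V2 L by simp
  next
    case False
    then have ev: "even k" by simp
    then obtain j where kj: "k = 2 * j" by (rule evenE)
    with assms(2) obtain m where km: "k = 2 * Suc m" by (cases j) auto
    have "last (Xw Z k) = a" "Xw Z k \<noteq> []" using Xl[of Z k] False by auto
    then have Xa: "Xw Z k = butlast (Xw Z k) @ [a]" by (metis append_butlast_last_id)
    have G1: "Gs (Xw Z (Suc k)) = Gs (Xw Z k)"
      using G_Ra[of "butlast (Xw Z k)"] Xa XS by metis
    obtain U where U: "Xw Z (2 * m) = U @ [a]" "sig U @ [a] = Rw Z (Suc m)" using XE by blast
    have "Xw Z k = sig (sig (Xw Z (2 * m)))" 
      unfolding km by (simp only: XS[symmetric] mult_Suc_right add_2_eq_Suc)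
    then have G2: "Gs (Xw Z k @ [b]) = Gs (Rw Z (Suc m))" using G_star U by metis
    have kd: "k div 2 = Suc m" using km by simp
    show ?thesis using False V1 V3 V4[of "Suc m"] L G1 G2 kd by simp
  qed
qed

end
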